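(* Let $N\ge3$ and consider, in the field variables $(\rho,\psi,\mu_1,\dots,\mu_{N-2})$, the hydrodynamic Poisson bracket $$\{F,G\}=\int\Big(\partial_xF_\psi G_\rho-F_\rho\partial_xG_\psi+\partial_xF_k\,\alpha_{kl}(\boldsymbol\mu)\,G_l+F_k\,\beta_{kl}(\boldsymbol\mu,\partial_x\boldsymbol\mu)\,G_l\Big)\mathrm dx,$$ with $\alpha_{kl}=(k+l)\mu_{k+l-1}$, $\beta_{kl}=k\,\partial_x\mu_{k+l-1}$, $k,l=1,\dots,N-2$ (summed), and $\mu_j=0$ for $j\ge N-1$. At points where $\mu_{N-2}\neq0$, the signature of this bracket is $(\lfloor N/2\rfloor,\lceil N/2\rceil)$ or $(\lceil N/2\rceil,\lfloor N/2\rfloor)$.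
   Context: Fields vanish at infinity with all derivatives; $F_\rho,F_\psi,F_k=\delta F/\delta\mu_k$ are functional derivatives. This bracket (Burby's closure of the one-dimensional Vlasov equation) is known to satisfy the Jacobi identity. A hydrodynamic bracket $\int(\partial_xF_n\alpha_{nm}G_m+F_n\beta_{nm}G_m)\mathrm dx$ is non-degenerate if $\alpha$ is invertible; a non-degenerate hydrodynamic Poisson bracket can be written, in suitable local coordinates $\boldsymbol\nu$, as $\int\partial_x\overline F_ng_{nm}\overline G_m\mathrm dx$ with $g$ constant symmetric non-degenerate (Dubrovin–Novikov), and its signature is the signature $(l,q)$ of $g$, $l$ the number of positive and $q$ the number of negative eigenvalues. *)

theory Defs
  imports "Jordan_Normal_Form.Char_Poly"
begin

definition n_pos_eig :: "real mat \<Rightarrow> nat" where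
  "n_pos_eig A = (\<Sum>a\<in>{a. a > 0 \<and> poly (char_poly A) a = 0}. order a (char_poly A))"

definition n_neg_eig :: "real mat \<Rightarrow> nat" where
  "n_neg_eig A = (\<Sum>a\<in>{a. a < 0 \<and> poly (char_poly A) a = 0}. order a (char_poly A))"

definition signature :: "real mat \<Rightarrow> nat \<times> nat" where
  "signature A = (n_pos_eig A, n_neg_eig A)"

text \<open>Field variables indexed 0 = rho, 1 = psi, k+1 = mu_k (k = 1..N-2).
  Leading-order coefficient matrix alpha of the bracket, written in the standard
  hydrodynamic form (integral of dF_n alpha_nm G_m + F_n beta_nm G_m).
  The term  - F_rho dG_psi  equals  dF_rho G_psi  after integration by parts, so
  alpha_{psi rho} = alpha_{rho psi} = 1; the mu-block is alpha_kl = (k+l) mu_{k+l-1},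
  with mu_j = 0 for j \<ge> N-1.  The beta terms do not contribute to alpha.
  mu :: nat => real gives the values mu_j at the point considered.\<close>

definition mu_trunc :: "nat \<Rightarrow> (nat \<Rightarrow> real) \<Rightarrow> nat \<Rightarrow> real" where
  "mu_trunc N mu j = (if 1 \<le> j \<and> j \<le> N - 2 then mu j else 0)"

definition burby_alpha :: "nat \<Rightarrow> (nat \<Rightarrow> real) \<Rightarrow> real mat" where
  "burby_alpha N mu = mat N N (\<lambda>(i, j).
     if (i = 0 \<and> j = 1) \<or> (i = 1 \<and> j = 0) then 1
     else if 2 \<le> i \<and> 2 \<le> j then
       (let k = i - 1; l = j - 1 in real (k + l) * mu_trunc N mu (k + l - 1))
     else 0)"

text \<open>Signature of the (non-degenerate) hydrodynamic bracket at the point: by Sylvester's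
  law of inertia the signature of the flat metric g in Dubrovin--Novikov coordinates equals
  the inertia of alpha at any point.\<close>

definition burby_bracket_signature :: "nat \<Rightarrow> (nat \<Rightarrow> real) \<Rightarrow> nat \<times> nat" where
  "burby_bracket_signature N mu = signature (burby_alpha N mu)"

end

theory Submission
  imports Defs
begin

lemma order_lin_real: "order a [:-(d::real), 1:] = (if a = d then 1 else 0)"
proof (cases "a = d")
  case True
  then show ?thesis using order_power_n_n[of a 1] by simp
next
  case False
  then show ?thesis by (intro order_0I[THEN trans]) auto
qed

lemma order_prod_lin: fixes d :: "nat \<Rightarrow> real" shows "order a (\<Prod>i<n. [:-(d i::real), 1:]) = card {i. i<n \<and> d i = a}"
proof (induction n)
  case 0
  then show ?case by simp
next
  case (Suc n)
  have ne: "(\<Prod>i<n. [:-(d i::real), 1:]) \<noteq> 0" by (simp add: prod_zero_iff)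
  have "{i. i<Suc n \<and> d i = a} = {i. i<n \<and> d i = a} \<union> (if d n = a then {n} else {})" by (auto simp: less_Suc_eq)
  then have c: "card {i. i<Suc n \<and> d i = a} = card {i. i<n \<and> d i = a} + (if d n = a then 1 else 0)"
    by auto
  have e: "(\<Prod>i<Suc n. [:-d i,1:]) = (\<Prod>i<n. [:-d i,1:]) * [:-d n,1:]" by simp
  have l: "[:-d n,1:] \<noteq> (0::real poly)" by simp
  have ne2: "(\<Prod>i<n. [:-d i,1:]) * [:-d n,1:] \<noteq> 0" by (rule no_zero_divisors[OF ne l])
  show ?case unfolding e order_mult[OF ne2] Suc.IH order_lin_real c by simp
qed


lemma real_eig_exists:
  fixes A :: "real mat"
  assumes A: "A \<in> carrier_mat n n" and n: "n > 0" and sym: "transpose_mat A = A"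
  shows "\<exists>l v. v \<in> carrier_vec n \<and> v \<noteq> 0\<^sub>v n \<and> A *\<^sub>v v = l \<cdot>\<^sub>v v"
proof -
  let ?Ac = "map_mat complex_of_real A"
  have Ac: "?Ac \<in> carrier_mat n n" using A by auto
  have cp: "char_poly ?Ac = map_poly complex_of_real (char_poly A)"
    by (rule of_real_hom.char_poly_hom[OF A])
  from char_poly_factorized[OF Ac] obtain as where
    as: "char_poly ?Ac = (\<Prod>a\<leftarrow>as. [:- a, 1:])" "length as = n" by blast
  then obtain z where z: "z \<in> set as" using n by (cases as) auto
  have "poly (char_poly ?Ac) z = 0" unfolding as(1) poly_prod_list prod_list_zero_iff
    using z by auto
  then have "eigenvalue ?Ac z" using eigenvalue_root_char_poly[OF Ac] by simp
  then obtain w where w: "w \<in> carrier_vec n" "w \<noteq> 0\<^sub>v n" "?Ac *\<^sub>v w = z \<cdot>\<^sub>v w"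
    unfolding eigenvalue_def eigenvector_def using Ac by auto
  define s where "s = (\<Sum>i<n. \<Sum>j<n. cnj (w$i) * ?Ac $$ (i,j) * w$j)"
  define r where "r = (\<Sum>i<n. cnj (w$i) * w$i)"
  have "s = (\<Sum>i<n. cnj (w$i) * (?Ac *\<^sub>v w)$i)"
    unfolding s_def
    by (rule sum.cong[OF refl], insert Ac w(1),
        auto simp: mult_mat_vec_def scalar_prod_def sum_distrib_left atLeast0LessThan ac_simps)
  also have "\<dots> = z * r" unfolding w(3) r_def using w(1)
    by (auto simp: sum_distrib_left ac_simps intro!: sum.cong)
  finally have s1: "s = z * r" .
  have "cnj s = (\<Sum>i<n. \<Sum>j<n. w$i * ?Ac $$ (i,j) * cnj (w$j))"
    unfolding s_def using A by (simp add: ac_simps)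
  also have "\<dots> = (\<Sum>j<n. \<Sum>i<n. w$i * ?Ac $$ (i,j) * cnj (w$j))"
    by (rule sum.swap)
  also have "\<dots> = s" unfolding s_def
  proof (intro sum.cong refl)
    fix i j assume "i \<in> {..<n}" "j \<in> {..<n}"
    then have "A $$ (j,i) = A $$ (i,j)" using arg_cong[OF sym, of "\<lambda>B. B $$ (i,j)"] A by auto
    then show "w$j * ?Ac $$ (j,i) * cnj (w$i) = cnj (w$i) * ?Ac $$ (i,j) * w$j"
      using A \<open>i \<in> {..<n}\<close> \<open>j \<in> {..<n}\<close> by auto
  qed
  finally have s2: "cnj s = s" .
  have rr: "r = complex_of_real (\<Sum>i<n. (cmod (w$i))^2)"
    unfolding r_def of_real_sum by (intro sum.cong refl) (use complex_norm_square in \<open>simp add: ac_simps\<close>)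
  have nz: "(\<Sum>i<n. (cmod (w$i))^2) \<noteq> 0"
  proof
    assume "(\<Sum>i<n. (cmod (w$i))^2) = 0"
    then have "\<forall>i\<in>{..<n}. (cmod (w$i))^2 = 0" by (subst (asm) sum_nonneg_eq_0_iff) auto
    then have "w = 0\<^sub>v n" using w(1) by (intro eq_vecI) auto
    then show False using w(2) by simp
  qed
  have r0: "r \<noteq> 0" "cnj r = r" unfolding rr using nz by (simp only: of_real_eq_0_iff complex_cnj_complex_of_real)+
  have "cnj z * r = z * r" using s1 s2 r0 by (metis complex_cnj_mult)
  then have "cnj z = z" using r0 by simp
  then have "z \<in> \<real>" using Reals_cnj_iff by blast
  then have zr: "z = complex_of_real (Re z)" using of_real_Re by metis
  have "complex_of_real (poly (char_poly A) (Re z)) = poly (char_poly ?Ac) z"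
    unfolding cp by (subst zr) (simp add: of_real_hom.poly_map_poly)
  also have "\<dots> = 0" by fact
  finally have "eigenvalue A (Re z)" using eigenvalue_root_char_poly[OF A] by simp
  then show ?thesis unfolding eigenvalue_def eigenvector_def using A by auto
qed

lemma householder:
  fixes v :: "real vec"
  assumes v: "v \<in> carrier_vec n" and n: "n > 0" and unit: "v \<bullet> v = 1"
  shows "\<exists>H. H \<in> carrier_mat n n \<and> transpose_mat H = H \<and> H * H = 1\<^sub>m n \<and> col H 0 = v"
proof -
  define u where "u i = v$i - (if i = 0 then 1 else 0)" for i
  define s where "s = (\<Sum>k<n. u k * u k)"
  define c where "c = 2 / s"
  define H where "H = mat n n (\<lambda>(i,j). (if i = j then 1 else 0) - c * u i * u j)"
  have H: "H \<in> carrier_mat n n" unfolding H_def by auto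
  have cs: "c * c * s = 2 * c" unfolding c_def by (cases "s = 0") (auto simp: field_simps power2_eq_square)
  have HT: "transpose_mat H = H" unfolding H_def by (intro eq_matI) auto
  have HH: "H * H = 1\<^sub>m n"
  proof (intro eq_matI)
    fix i j assume i: "i < dim_row (1\<^sub>m n)" and j: "j < dim_col (1\<^sub>m n)"
    then have i: "i < n" and j: "j < n" by auto
    have "(H * H) $$ (i,j) = (\<Sum>k<n. ((if i = k then 1 else 0) - c*u i*u k) * ((if k = j then 1 else 0) - c*u k*u j))"
      using H i j by (auto simp: scalar_prod_def H_def atLeast0LessThan intro!: sum.cong)
    also have "\<dots> = (\<Sum>k<n. (if i = k then (if k = j then 1 else 0) else 0)
         - (if k = j then c*u i*u k else 0) - (if i = k then c*u k*u j else 0) + c*c*u i*u j*(u k*u k))"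
      by (intro sum.cong refl) (auto simp: algebra_simps)
    also have "\<dots> = (if i = j then 1 else 0) - c*u i*u j - c*u i*u j + c*c*u i*u j*s"
      unfolding sum.distrib sum_subtractf s_def sum_distrib_left[symmetric]
      using i j by simp
    also have "\<dots> = (if i = j then 1 else 0) - 2*c*(u i*u j) + (c*c*s)*(u i*u j)"
      by (simp add: algebra_simps)
    also have "\<dots> = (if i = j then 1 else 0)" unfolding cs by simp
    finally show "(H * H) $$ (i,j) = 1\<^sub>m n $$ (i,j)" using i j by simp
  qed (use H in auto)
  have vv: "(\<Sum>k<n. v$k * v$k) = 1" using unit v by (simp add: scalar_prod_def atLeast0LessThan)
  have s2: "s = 2 - 2 * v$0"
  proof -
    have "s = (\<Sum>k<n. v$k * v$k - (if k = 0 then 2 * v$k else 0) + (if k = 0 then 1 else 0))"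
      unfolding s_def u_def by (intro sum.cong refl) (auto simp: algebra_simps)
    also have "\<dots> = 2 - 2 * v$0" unfolding sum.distrib sum_subtractf vv using n by simp
    finally show ?thesis .
  qed
  have colH: "col H 0 = v"
  proof (intro eq_vecI)
    fix i assume "i < dim_vec v"
    then have i: "i < n" using v by auto
    show "col H 0 $ i = v $ i"
    proof (cases "v$0 = 1")
      case True
      then have "s = 0" using s2 by simp
      then have "\<forall>k\<in>{..<n}. u k * u k = 0" unfolding s_def
        by (subst (asm) sum_nonneg_eq_0_iff) auto
      then have "u i = 0" using i by auto
      then show ?thesis using i n H unfolding H_def u_def by (auto split: if_splits)
    next
      case False
      then have "c * u 0 = -1" unfolding c_def s2 u_def by (auto simp: field_simps)
      then have "c * u i * u 0 = - u i" by (metis mult.commute mult_minus1_right mult.left_commute)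
      then show ?thesis using i n H unfolding H_def u_def by (auto simp: algebra_simps)
    qed
  qed (use H v in auto)
  show ?thesis using H HT HH colH by blast
qed

definition dmat :: "nat \<Rightarrow> (nat \<Rightarrow> real) \<Rightarrow> real mat" where
  "dmat n d = mat n n (\<lambda>(i,j). if i = j then d i else 0)"

lemma dmat_carrier[simp]: "dmat n d \<in> carrier_mat n n" unfolding dmat_def by auto
lemma dmat_dim[simp]: "dim_row (dmat n d) = n" "dim_col (dmat n d) = n" unfolding dmat_def by auto

lemma QDQ_entry:
  fixes Q :: "real mat"
  assumes Q: "Q \<in> carrier_mat n n" and i: "i < n" and j: "j < n"
  shows "(Q * dmat n d * transpose_mat Q) $$ (i,j) = (\<Sum>k<n. Q $$ (i,k) * d k * Q $$ (j,k))"
proof -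
  have "(Q * dmat n d) $$ (i,k) = Q $$ (i,k) * d k" if k: "k < n" for k
  proof -
    have "(Q * dmat n d) $$ (i,k) = (\<Sum>l<n. Q $$ (i,l) * (if l = k then d l else 0))"
      using Q i k by (auto simp: scalar_prod_def dmat_def atLeast0LessThan intro!: sum.cong)
    also have "\<dots> = (\<Sum>l<n. if l = k then Q $$ (i,l) * d l else 0)"
      by (intro sum.cong) auto
    also have "\<dots> = Q $$ (i,k) * d k" using k by simp
    finally show ?thesis .
  qed
  then show ?thesis using Q i j
    by (auto simp: scalar_prod_def atLeast0LessThan intro!: sum.cong)
qed

lemma QTQ_entry:
  fixes Q :: "real mat"
  assumes Q: "Q \<in> carrier_mat n n" and i: "i < n" and j: "j < n"
  shows "(transpose_mat Q * Q) $$ (i,j) = (\<Sum>k<n. Q $$ (k,i) * Q $$ (k,j))"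
  using Q i j by (auto simp: scalar_prod_def atLeast0LessThan intro!: sum.cong)

lemma spectral:
  fixes A :: "real mat"
  assumes "A \<in> carrier_mat n n" "transpose_mat A = A"
  shows "\<exists>Q d. Q \<in> carrier_mat n n \<and> transpose_mat Q * Q = 1\<^sub>m n \<and> A = Q * dmat n d * transpose_mat Q"
  using assms
proof (induction n arbitrary: A)
  case 0
  show ?case
    by (rule exI[of _ "1\<^sub>m 0"], rule exI[of _ "\<lambda>_. 0"]) (use 0 in \<open>auto intro!: eq_matI\<close>)
next
  case (Suc m A)
  define n where "n = Suc m"
  have A: "A \<in> carrier_mat n n" and sym: "transpose_mat A = A" using Suc.prems n_def by auto
  obtain l w where w: "w \<in> carrier_vec n" "w \<noteq> 0\<^sub>v n" "A *\<^sub>v w = l \<cdot>\<^sub>v w"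
    using real_eig_exists[OF A _ sym] n_def by auto
  have ww: "w \<bullet> w > 0"
  proof -
    have "w \<bullet> w = (\<Sum>k<n. (w$k)^2)" using w(1) by (simp add: scalar_prod_def atLeast0LessThan power2_eq_square)
    moreover have "(\<Sum>k<n. (w$k)^2) \<noteq> 0"
    proof
      assume "(\<Sum>k<n. (w$k)^2) = 0"
      then have "\<forall>k\<in>{..<n}. (w$k)^2 = 0" by (subst (asm) sum_nonneg_eq_0_iff) auto
      then have "w = 0\<^sub>v n" using w(1) by (intro eq_vecI) auto
      then show False using w(2) by simp
    qed
    moreover have "(\<Sum>k<n. (w$k)^2) \<ge> 0" by (intro sum_nonneg) auto
    ultimately show ?thesis by linarith
  qed
  define v where "v = (1 / sqrt (w \<bullet> w)) \<cdot>\<^sub>v w"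
  have v: "v \<in> carrier_vec n" unfolding v_def using w(1) by auto
  have vv: "v \<bullet> v = 1" unfolding v_def using w(1) ww
    by (simp add: smult_scalar_prod_distrib scalar_prod_smult_distrib[OF w(1)] real_sqrt_mult[symmetric])
  have Av: "A *\<^sub>v v = l \<cdot>\<^sub>v v" unfolding v_def
    using mult_mat_vec[OF A w(1)] w(3) by (simp add: smult_smult_assoc mult.commute)
  obtain H where H: "H \<in> carrier_mat n n" "transpose_mat H = H" "H * H = 1\<^sub>m n" "col H 0 = v"
    using householder[OF v _ vv] n_def by auto
  define B where "B = H * A * H"
  have B: "B \<in> carrier_mat n n" unfolding B_def using H A by auto
  have BT: "transpose_mat B = B" unfolding B_def
    using H A sym by (simp add: transpose_mult[of _ n n _ n] assoc_mult_mat[of _ n n _ n _ n])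
  have colB: "col B 0 = l \<cdot>\<^sub>v unit_vec n 0"
  proof -
    have "col B 0 = (H * A) *\<^sub>v col H 0" unfolding B_def using H A n_def by (intro col_mult2) auto
    also have "\<dots> = H *\<^sub>v (A *\<^sub>v v)" using H A v by auto
    also have "\<dots> = l \<cdot>\<^sub>v (H *\<^sub>v col H 0)" unfolding Av H(4) by (rule mult_mat_vec[OF H(1) v])
    also have "H *\<^sub>v col H 0 = col (H * H) 0" using H n_def by (intro col_mult2[symmetric]) auto
    also have "\<dots> = unit_vec n 0" unfolding H(3) using n_def by simp
    finally show ?thesis .
  qed
  have B0: "B $$ (i,0) = (if i = 0 then l else 0)" if "i < n" for i
    using arg_cong[OF colB, of "\<lambda>x. x $ i"] that B n_def by (auto simp: unit_vec_def)
  have B0': "B $$ (0,j) = (if j = 0 then l else 0)" if "j < n" for j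
    using B0[OF that] arg_cong[OF BT, of "\<lambda>X. X $$ (j,0)"] that B n_def by auto
  define A' where "A' = mat m m (\<lambda>(i,j). B $$ (Suc i, Suc j))"
  have A': "A' \<in> carrier_mat m m" unfolding A'_def by auto
  have A'T: "transpose_mat A' = A'" unfolding A'_def
  proof (intro eq_matI)
    fix i j assume "i < dim_row (mat m m (\<lambda>(i, j). B $$ (Suc i, Suc j)))" "j < dim_col (mat m m (\<lambda>(i, j). B $$ (Suc i, Suc j)))"
    then show "transpose_mat (mat m m (\<lambda>(i, j). B $$ (Suc i, Suc j))) $$ (i, j) = mat m m (\<lambda>(i, j). B $$ (Suc i, Suc j)) $$ (i, j)"
      using arg_cong[OF BT, of "\<lambda>X. X $$ (Suc i, Suc j)"] B n_def by auto
  qed auto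
  obtain Q' d' where Q': "Q' \<in> carrier_mat m m" "transpose_mat Q' * Q' = 1\<^sub>m m" "A' = Q' * dmat m d' * transpose_mat Q'"
    using Suc.IH[OF A' A'T] by auto
  define Q2 where "Q2 = mat n n (\<lambda>(i,j). if i = 0 \<and> j = 0 then 1 else if i = 0 \<or> j = 0 then 0 else Q' $$ (i-1,j-1))"
  define d where "d i = (if i = 0 then l else d' (i - 1))" for i
  have Q2: "Q2 \<in> carrier_mat n n" unfolding Q2_def by auto
  have Q2e: "Q2 $$ (i,j) = (if i = 0 \<and> j = 0 then 1 else if i = 0 \<or> j = 0 then 0 else Q' $$ (i-1,j-1))"
    if "i < n" "j < n" for i j using that unfolding Q2_def by auto
  have BQ: "B = Q2 * dmat n d * transpose_mat Q2"
  proof (rule eq_matI)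
    fix i j assume "i < dim_row (Q2 * dmat n d * transpose_mat Q2)" "j < dim_col (Q2 * dmat n d * transpose_mat Q2)"
    then have i: "i < n" and j: "j < n" using Q2 by auto
    have "(Q2 * dmat n d * transpose_mat Q2) $$ (i,j) = (\<Sum>k<Suc m. Q2 $$ (i,k) * d k * Q2 $$ (j,k))"
      using QDQ_entry[OF Q2 i j] n_def by simp
    also have "\<dots> = Q2 $$ (i,0) * d 0 * Q2 $$ (j,0) + (\<Sum>k<m. Q2 $$ (i,Suc k) * d (Suc k) * Q2 $$ (j,Suc k))"
      by (subst sum.lessThan_Suc_shift) simp
    also have "\<dots> = B $$ (i,j)"
    proof (cases "i = 0 \<or> j = 0")
      case True
      then show ?thesis using Q2e i j n_def B0 B0' d_def by auto
    next
      case False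
      then obtain i' j' where ij: "i = Suc i'" "j = Suc j'" by (cases i; cases j) auto
      have "(\<Sum>k<m. Q2 $$ (i,Suc k) * d (Suc k) * Q2 $$ (j,Suc k)) = (\<Sum>k<m. Q' $$ (i',k) * d' k * Q' $$ (j',k))"
        using ij i j n_def by (intro sum.cong refl) (auto simp: Q2e d_def)
      also have "\<dots> = A' $$ (i',j')" unfolding Q'(3) using QDQ_entry[OF Q'(1)] ij i j n_def by simp
      also have "\<dots> = B $$ (i,j)" unfolding A'_def using ij i j n_def by simp
      finally show ?thesis using ij i j n_def Q2e by simp
    qed
    finally show "B $$ (i,j) = (Q2 * dmat n d * transpose_mat Q2) $$ (i,j)" by simp
  qed (use B Q2 in auto)
  have Q2Q2: "transpose_mat Q2 * Q2 = 1\<^sub>m n"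
  proof (rule eq_matI)
    fix i j assume "i < dim_row (1\<^sub>m n)" "j < dim_col (1\<^sub>m n)"
    then have i: "i < n" and j: "j < n" by auto
    have "(transpose_mat Q2 * Q2) $$ (i,j) = (\<Sum>k<Suc m. Q2 $$ (k,i) * Q2 $$ (k,j))"
      using QTQ_entry[OF Q2 i j] n_def by simp
    also have "\<dots> = Q2 $$ (0,i) * Q2 $$ (0,j) + (\<Sum>k<m. Q2 $$ (Suc k,i) * Q2 $$ (Suc k,j))"
      by (subst sum.lessThan_Suc_shift) simp
    also have "\<dots> = 1\<^sub>m n $$ (i,j)"
    proof (cases "i = 0 \<or> j = 0")
      case True
      then show ?thesis using Q2e i j n_def by auto
    next
      case False
      then obtain i' j' where ij: "i = Suc i'" "j = Suc j'" by (cases i; cases j) auto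
      have "(\<Sum>k<m. Q2 $$ (Suc k,i) * Q2 $$ (Suc k,j)) = (\<Sum>k<m. Q' $$ (k,i') * Q' $$ (k,j'))"
        using ij i j n_def by (intro sum.cong refl) (auto simp: Q2e)
      also have "\<dots> = (transpose_mat Q' * Q') $$ (i',j')" using QTQ_entry[OF Q'(1)] ij i j n_def by simp
      also have "\<dots> = 1\<^sub>m n $$ (i,j)" unfolding Q'(2) using ij i j n_def by simp
      finally show ?thesis using ij i j n_def Q2e by simp
    qed
    finally show "(transpose_mat Q2 * Q2) $$ (i,j) = 1\<^sub>m n $$ (i,j)" .
  qed (use Q2 in auto)
  define Q where "Q = H * Q2"
  have Q: "Q \<in> carrier_mat n n" unfolding Q_def using H Q2 by auto
  have QT: "transpose_mat Q = transpose_mat Q2 * H" unfolding Q_def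
    using transpose_mult[OF H(1) Q2] H(2) by simp
  have "transpose_mat Q * Q = transpose_mat Q2 * (H * H) * Q2"
    unfolding QT unfolding Q_def using H(1) Q2 by (simp add: assoc_mult_mat[of _ n n _ n _ n])
  also have "\<dots> = 1\<^sub>m n" unfolding H(3) using Q2 Q2Q2 by simp
  finally have QQ: "transpose_mat Q * Q = 1\<^sub>m n" .
  have "A = (H * H) * A * (H * H)" unfolding H(3) using A by simp
  also have "\<dots> = H * B * H" unfolding B_def using H(1) A by (simp add: assoc_mult_mat[of _ n n _ n _ n])
  also have "\<dots> = H * (Q2 * dmat n d * transpose_mat Q2) * H" unfolding BQ ..
  also have "\<dots> = Q * dmat n d * transpose_mat Q" unfolding QT unfolding Q_def
    using H(1) Q2 by (simp add: assoc_mult_mat[of _ n n _ n _ n] mult_carrier_mat[of _ n n _ n])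
  finally show ?case using Q QQ n_def by blast
qed

lemma char_poly_dmat: "char_poly (dmat n d) = (\<Prod>i<n. [:-d i, 1:])"
proof -
  have ut: "upper_triangular (dmat n d)" unfolding upper_triangular_def dmat_def by auto
  have dg: "diag_mat (dmat n d) = map d [0..<n]" unfolding diag_mat_def dmat_def
    by (intro nth_equalityI) auto
  show ?thesis unfolding char_poly_upper_triangular[OF dmat_carrier ut] dg
    by (simp add: prod.distinct_set_conv_list[symmetric] atLeast_upt comp_def)
qed

lemma char_poly_decomp:
  fixes A Q :: "real mat"
  assumes Q: "Q \<in> carrier_mat n n" and QQ: "transpose_mat Q * Q = 1\<^sub>m n"
    and AQ: "A = Q * dmat n d * transpose_mat Q"
  shows "char_poly A = (\<Prod>i<n. [:-d i, 1:])"
proof -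
  have QT: "transpose_mat Q \<in> carrier_mat n n" using Q by auto
  have QQ': "Q * transpose_mat Q = 1\<^sub>m n" by (rule mat_mult_left_right_inverse[OF QT Q QQ])
  have A: "A \<in> carrier_mat n n" unfolding AQ using Q by auto
  have "similar_mat A (dmat n d)"
    by (rule similar_matI[of _ _ Q "transpose_mat Q" n]) (use A Q QT QQ QQ' AQ in auto)
  then show ?thesis using char_poly_similar char_poly_dmat by metis
qed

lemma count_roots:
  fixes d :: "nat \<Rightarrow> real" and P :: "real \<Rightarrow> bool"
  shows "(\<Sum>a\<in>{a. P a \<and> poly (\<Prod>i<n. [:-d i, 1:]) a = 0}. order a (\<Prod>i<n. [:-d i, 1:]))
     = card {i. i < n \<and> P (d i)}"
proof -
  let ?p = "\<Prod>i<n. [:-d i, 1:]"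
  define I where "I = {i. i < n \<and> P (d i)}"
  have rt: "poly ?p a = 0 \<longleftrightarrow> (\<exists>i<n. d i = a)" for a
    by (auto simp: poly_prod prod_zero_iff)
  have set: "{a. P a \<and> poly ?p a = 0} = d ` I" unfolding rt I_def by auto
  have fI: "finite I" unfolding I_def by auto
  have "card I = (\<Sum>i\<in>I. 1)" by simp
  also have "\<dots> = (\<Sum>a\<in>d ` I. \<Sum>i\<in>{x\<in>I. d x = a}. 1)" by (rule sum.image_gen[OF fI])
  also have "\<dots> = (\<Sum>a\<in>d ` I. order a ?p)"
  proof (intro sum.cong refl)
    fix a assume "a \<in> d ` I"
    then have "{x\<in>I. d x = a} = {i. i < n \<and> d i = a}" unfolding I_def by auto
    then show "(\<Sum>i\<in>{x\<in>I. d x = a}. 1) = order a ?p" unfolding order_prod_lin by simp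
  qed
  finally show ?thesis unfolding set I_def by simp
qed

lemma npos_decomp:
  fixes A Q :: "real mat"
  assumes Q: "Q \<in> carrier_mat n n" and QQ: "transpose_mat Q * Q = 1\<^sub>m n"
    and AQ: "A = Q * dmat n d * transpose_mat Q"
  shows "n_pos_eig A = card {i. i < n \<and> d i > 0}" "n_neg_eig A = card {i. i < n \<and> d i < 0}"
  unfolding n_pos_eig_def n_neg_eig_def char_poly_decomp[OF assms]
  using count_roots[where P="\<lambda>a. a > 0"] count_roots[where P="\<lambda>a. a < 0"] by auto

lemma length_filter_upt: "length (filter f [0..<n]) = card {i. i < n \<and> f i}"
proof -
  have "set (filter f [0..<n]) = {i. i < n \<and> f i}" by auto
  then show ?thesis by (metis distinct_card distinct_filter distinct_upt)
qed

lemma iso_bound: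
  fixes A Q :: "real mat"
  assumes Q: "Q \<in> carrier_mat n n" and QQ: "transpose_mat Q * Q = 1\<^sub>m n"
    and AQ: "A = Q * dmat n d * transpose_mat Q"
    and S: "S \<subseteq> {..<n}" and iso: "\<And>i j. i \<in> S \<Longrightarrow> j \<in> S \<Longrightarrow> A $$ (i,j) = 0"
  shows "card {i. i < n \<and> d i > 0} + card S \<le> n"
proof (rule ccontr)
  define P where "P = {i. i < n \<and> d i > 0}"
  assume "\<not> card {i. i < n \<and> d i > 0} + card S \<le> n"
  then have big: "card P + card S > n" unfolding P_def by simp
  have QT: "transpose_mat Q \<in> carrier_mat n n" using Q by auto
  have QQ': "Q * transpose_mat Q = 1\<^sub>m n" by (rule mat_mult_left_right_inverse[OF QT Q QQ])
  have A: "A \<in> carrier_mat n n" unfolding AQ using Q by auto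
  define L where "L = map (unit_vec n) (filter (\<lambda>j. j \<notin> S) [0..<n]) @ map (col Q) (filter (\<lambda>i. i \<notin> P) [0..<n])"
  have cS: "card {i. i < n \<and> i \<notin> S} = n - card S"
  proof -
    have "{i. i < n \<and> i \<notin> S} = {..<n} - S" by auto
    then show ?thesis using S by (simp add: card_Diff_subset finite_subset)
  qed
  have cP: "card {i. i < n \<and> i \<notin> P} = n - card P"
  proof -
    have "{i. i < n \<and> i \<notin> P} = {..<n} - P" by auto
    moreover have "P \<subseteq> {..<n}" unfolding P_def by auto
    ultimately show ?thesis by (simp add: card_Diff_subset finite_subset)
  qed
  have "card S \<le> n" using S by (metis card_lessThan card_mono finite_lessThan)
  moreover have "card P \<le> n" unfolding P_def by (metis (no_types, lifting) card_lessThan card_mono finite_lessThan lessThan_iff mem_Collect_eq subsetI)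
  ultimately have lenL: "length L < n" unfolding L_def using cS cP big by (simp add: length_filter_upt)
  then have n0: "n > 0" by simp
  have Lc: "x \<in> carrier_vec n" if "x \<in> set L" for x using that Q unfolding L_def by auto
  define c where "c r = (if r < length L then L ! r else 0\<^sub>v n)" for r
  define M where "M = mat\<^sub>r n n (\<lambda>r. if r = n - 1 then 0\<^sub>v n else c r)"
  have cc: "c \<in> {0..<n} \<rightarrow> carrier_vec n" unfolding c_def using Lc by auto
  have "det M = 0" unfolding M_def by (rule det_row_0[OF _ cc]) (use n0 in simp)
  moreover have M: "M \<in> carrier_mat n n" unfolding M_def by auto
  ultimately obtain w where w: "w \<in> carrier_vec n" "w \<noteq> 0\<^sub>v n" "M *\<^sub>v w = 0\<^sub>v n"
    using det_0_iff_vec_prod_zero_field[OF M] by auto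
  have orth: "x \<bullet> w = 0" if x: "x \<in> set L" for x
  proof -
    from x obtain r where r: "r < length L" "x = L ! r" by (metis in_set_conv_nth)
    have "(M *\<^sub>v w) $ r = row M r \<bullet> w" using r lenL M by auto
    also have "row M r = x" unfolding M_def using r lenL Lc[OF x] c_def by (subst row_mat_of_row_fun) auto
    finally show ?thesis using w(3) r lenL by auto
  qed
  have wS: "w $ j = 0" if "j < n" "j \<notin> S" for j
    using orth[of "unit_vec n j"] that w(1) unfolding L_def by auto
  define cv where "cv = transpose_mat Q *\<^sub>v w"
  have cv: "cv \<in> carrier_vec n" unfolding cv_def using QT w by auto
  have cvP: "cv $ i = 0" if "i < n" "i \<notin> P" for i
  proof -
    have "cv $ i = col Q i \<bullet> w" unfolding cv_def using that Q by auto
    also have "\<dots> = 0" using orth[of "col Q i"] that unfolding L_def by auto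
    finally show ?thesis .
  qed
  have Qcv: "Q *\<^sub>v cv = w" unfolding cv_def
    using Q QT w QQ' by (simp add: assoc_mult_mat_vec[symmetric])
  have cv0: "cv \<noteq> 0\<^sub>v n" using Qcv w(2) Q by auto
  then obtain i0 where i0: "i0 < n" "cv $ i0 \<noteq> 0" using cv by (metis eq_vecI carrier_vecD index_zero_vec)
  then have i0P: "i0 \<in> P" using cvP by blast
  have "(Q * dmat n d * transpose_mat Q) *\<^sub>v w = (Q * dmat n d) *\<^sub>v (transpose_mat Q *\<^sub>v w)"
    by (rule assoc_mult_mat_vec) (use Q QT w in auto)
  also have "\<dots> = Q *\<^sub>v (dmat n d *\<^sub>v (transpose_mat Q *\<^sub>v w))"
    by (rule assoc_mult_mat_vec) (use Q QT w in auto)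
  finally have "w \<bullet> (A *\<^sub>v w) = w \<bullet> (Q *\<^sub>v (dmat n d *\<^sub>v cv))"
    unfolding AQ cv_def by simp
  also have "\<dots> = cv \<bullet> (dmat n d *\<^sub>v cv)" unfolding cv_def
    by (rule transpose_vec_mult_scalar[symmetric, OF Q _ w(1)], rule mult_mat_vec_carrier[OF dmat_carrier], rule mult_mat_vec_carrier[OF QT w(1)])
  also have "\<dots> = (\<Sum>i<n. d i * (cv $ i)^2)"
  proof -
    have "(dmat n d *\<^sub>v cv) $ i = d i * cv $ i" if "i < n" for i
    proof -
      have "(dmat n d *\<^sub>v cv) $ i = (\<Sum>k<n. (if i = k then d i else 0) * cv $ k)"
        using that cv by (auto simp: dmat_def scalar_prod_def atLeast0LessThan intro!: sum.cong)
      also have "\<dots> = (\<Sum>k<n. if k = i then d i * cv $ k else 0)" by (intro sum.cong) auto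
      finally show ?thesis using that by simp
    qed
    then show ?thesis using cv
      by (auto simp: scalar_prod_def atLeast0LessThan power2_eq_square intro!: sum.cong)
  qed
  also have "\<dots> > 0"
  proof -
    have nn: "\<forall>i\<in>{..<n}. d i * (cv $ i)^2 \<ge> 0"
    proof
      fix i assume "i \<in> {..<n}"
      then show "d i * (cv $ i)^2 \<ge> 0" using cvP[of i] unfolding P_def by (cases "d i > 0") auto
    qed
    have "d i0 * (cv $ i0)^2 > 0" using i0 i0P unfolding P_def by auto
    moreover have "d i0 * (cv $ i0)^2 \<le> (\<Sum>i<n. d i * (cv $ i)^2)"
      by (rule member_le_sum) (use nn i0 in auto)
    ultimately show ?thesis by linarith
  qed
  finally have pos: "w \<bullet> (A *\<^sub>v w) > 0" .
  have "w \<bullet> (A *\<^sub>v w) = (\<Sum>j<n. w $ j * (\<Sum>l<n. A $$ (j,l) * w $ l))"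
    using A w by (auto simp: scalar_prod_def atLeast0LessThan intro!: sum.cong)
  also have "\<dots> = 0"
  proof (intro sum.neutral ballI)
    fix j assume j: "j \<in> {..<n}"
    show "w $ j * (\<Sum>l<n. A $$ (j,l) * w $ l) = 0"
    proof (cases "j \<in> S")
      case True
      have "(\<Sum>l<n. A $$ (j,l) * w $ l) = 0"
        by (intro sum.neutral ballI) (use True iso wS in auto)
      then show ?thesis by simp
    next
      case False
      then show ?thesis using wS j by auto
    qed
  qed
  finally show False using pos by simp
qed

lemma burby_entry:
  assumes "i < N" "j < N"
  shows "burby_alpha N mu $$ (i,j) = (if (i = 0 \<and> j = 1) \<or> (i = 1 \<and> j = 0) then 1
     else if 2 \<le> i \<and> 2 \<le> j then real ((i - 1) + (j - 1)) * mu_trunc N mu ((i - 1) + (j - 1) - 1) else 0)"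
  using assms unfolding burby_alpha_def by (simp add: Let_def)

lemma burby_carrier: "burby_alpha N mu \<in> carrier_mat N N"
  unfolding burby_alpha_def by auto

lemma burby_sym: "transpose_mat (burby_alpha N mu) = burby_alpha N mu"
  by (rule eq_matI) (auto simp: burby_entry burby_carrier[THEN carrier_matD(1)] burby_carrier[THEN carrier_matD(2)] add.commute)

lemma burby_kernel:
  assumes N: "N \<ge> 3" and mu: "mu (N - 2) \<noteq> 0"
    and x: "x \<in> carrier_vec N" and Ax: "burby_alpha N mu *\<^sub>v x = 0\<^sub>v N"
  shows "x = 0\<^sub>v N"
proof -
  let ?A = "burby_alpha N mu"
  have row: "(\<Sum>j<N. ?A $$ (i,j) * x $ j) = 0" if "i < N" for i
  proof -
    have "(?A *\<^sub>v x) $ i = (\<Sum>j<N. ?A $$ (i,j) * x $ j)"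
      using that x burby_carrier[of N mu] by (auto simp: scalar_prod_def atLeast0LessThan intro!: sum.cong)
    then show ?thesis using Ax that by simp
  qed
  have single: "(\<Sum>j<N. ?A $$ (i,j) * x $ j) = ?A $$ (i,j0) * x $ j0"
    if "j0 < N" "\<And>j. j < N \<Longrightarrow> j \<noteq> j0 \<Longrightarrow> ?A $$ (i,j) * x $ j = 0" for i j0
  proof -
    have "(\<Sum>j<N. ?A $$ (i,j) * x $ j) = (\<Sum>j<N. if j = j0 then ?A $$ (i,j0) * x $ j0 else 0)"
      by (intro sum.cong refl) (use that in auto)
    then show ?thesis using that by simp
  qed
  have x1: "x $ 1 = 0"
  proof -
    have "(\<Sum>j<N. ?A $$ (0,j) * x $ j) = ?A $$ (0,1) * x $ 1"
      by (rule single) (use N in \<open>auto simp: burby_entry\<close>)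
    then show ?thesis using row[of 0] N by (simp add: burby_entry)
  qed
  have x0: "x $ 0 = 0"
  proof -
    have "(\<Sum>j<N. ?A $$ (1,j) * x $ j) = ?A $$ (1,0) * x $ 0"
      by (rule single) (use N in \<open>auto simp: burby_entry\<close>)
    then show ?thesis using row[of 1] N by (simp add: burby_entry)
  qed
  have xj: "x $ j = 0" if "2 \<le> j" "j < N" for j
    using that
  proof (induction j rule: less_induct)
    case (less j)
    define i where "i = N + 1 - j"
    have i: "i < N" "2 \<le> i" using less.prems unfolding i_def by auto
    have "(\<Sum>j'<N. ?A $$ (i,j') * x $ j') = ?A $$ (i,j) * x $ j"
    proof (rule single)
      fix j' assume j': "j' < N" "j' \<noteq> j"
      show "?A $$ (i,j') * x $ j' = 0"
      proof (cases "j' < 2")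
        case True
        then show ?thesis using i j' by (auto simp: burby_entry)
      next
        case False
        show ?thesis
        proof (cases "j' < j")
          case True
          then show ?thesis using less.IH[of j'] False j' by auto
        next
          case False2: False
          then have "(i - 1) + (j' - 1) - 1 > N - 2" using j' less.prems i unfolding i_def by auto
          then show ?thesis using i j' False by (auto simp: burby_entry mu_trunc_def)
        qed
      qed
    qed (use less.prems in auto)
    moreover have "?A $$ (i,j) = real (N - 1) * mu (N - 2)"
    proof -
      have "(i - 1) + (j - 1) = N - 1" using less.prems unfolding i_def by auto
      then show ?thesis using i less.prems N by (auto simp: burby_entry mu_trunc_def numeral_2_eq_2)
    qed
    moreover have "real (N - 1) * mu (N - 2) \<noteq> 0" using N mu by auto
    ultimately show ?case using row[OF i(1)] by simp
  qed
  show ?thesis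
  proof (rule eq_vecI)
    fix j assume "j < dim_vec (0\<^sub>v N)"
    then have "j < N" by simp
    then show "x $ j = 0\<^sub>v N $ j" using x0 x1 xj[of j] by (cases "j = 0 \<or> j = 1") auto
  qed (use x in auto)
qed

lemma neg_decomp:
  fixes A Q :: "real mat"
  assumes Q: "Q \<in> carrier_mat n n" and AQ: "A = Q * dmat n d * transpose_mat Q"
  shows "- A = Q * dmat n (\<lambda>i. - d i) * transpose_mat Q"
proof (rule eq_matI)
  fix i j assume "i < dim_row (Q * dmat n (\<lambda>i. - d i) * transpose_mat Q)"
    "j < dim_col (Q * dmat n (\<lambda>i. - d i) * transpose_mat Q)"
  then have i: "i < n" and j: "j < n" using Q by auto
  have A: "A \<in> carrier_mat n n" using Q AQ by auto
  show "(- A) $$ (i,j) = (Q * dmat n (\<lambda>i. - d i) * transpose_mat Q) $$ (i,j)"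
  proof -
    have e1: "(- A) $$ (i,j) = - (A $$ (i,j))" using A i j by simp
    have e2: "A $$ (i,j) = (\<Sum>k<n. Q $$ (i,k) * d k * Q $$ (j,k))" unfolding AQ by (rule QDQ_entry[OF Q i j])
    show ?thesis unfolding QDQ_entry[OF Q i j] e1 e2 by (simp add: sum_negf[symmetric])
  qed
qed (use Q AQ in auto)

theorem proposition7:
  fixes N :: nat and mu :: "nat \<Rightarrow> real"
  assumes "N \<ge> 3" and "mu (N - 2) \<noteq> 0"
  shows "burby_bracket_signature N mu = (N div 2, (N + 1) div 2)
       \<or> burby_bracket_signature N mu = ((N + 1) div 2, N div 2)"
proof -
  let ?A = "burby_alpha N mu"
  have A: "?A \<in> carrier_mat N N" by (rule burby_carrier)
  obtain Q d where Q: "Q \<in> carrier_mat N N" and QQ: "transpose_mat Q * Q = 1\<^sub>m N"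
    and AQ: "?A = Q * dmat N d * transpose_mat Q"
    using spectral[OF A burby_sym] by blast
  have QT: "transpose_mat Q \<in> carrier_mat N N" using Q by auto
  have d0: "d i \<noteq> 0" if i: "i < N" for i
  proof
    assume di: "d i = 0"
    define x where "x = col Q i"
    have x: "x \<in> carrier_vec N" unfolding x_def using Q by auto
    have Qx: "transpose_mat Q *\<^sub>v x = unit_vec N i"
    proof -
      have "transpose_mat Q *\<^sub>v x = col (transpose_mat Q * Q) i"
        unfolding x_def using Q QT i by (intro col_mult2[symmetric]) auto
      then show ?thesis unfolding QQ using i by simp
    qed
    have "dmat N d *\<^sub>v unit_vec N i = 0\<^sub>v N"
    proof (rule eq_vecI)
      fix k assume "k < dim_vec (0\<^sub>v N)"
      then have k: "k < N" by simp
      have "(dmat N d *\<^sub>v unit_vec N i) $ k = (\<Sum>l<N. (if k = l then d k else 0) * unit_vec N i $ l)"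
        using k i by (auto simp: dmat_def scalar_prod_def atLeast0LessThan intro!: sum.cong)
      also have "\<dots> = 0" using di by (intro sum.neutral) (auto simp: unit_vec_def)
      finally show "(dmat N d *\<^sub>v unit_vec N i) $ k = 0\<^sub>v N $ k" using k by simp
    qed simp
    moreover have "?A *\<^sub>v x = Q *\<^sub>v (dmat N d *\<^sub>v (transpose_mat Q *\<^sub>v x))"
    proof -
      have "(Q * dmat N d * transpose_mat Q) *\<^sub>v x = (Q * dmat N d) *\<^sub>v (transpose_mat Q *\<^sub>v x)"
        by (rule assoc_mult_mat_vec) (use Q QT x in auto)
      also have "\<dots> = Q *\<^sub>v (dmat N d *\<^sub>v (transpose_mat Q *\<^sub>v x))"
        by (rule assoc_mult_mat_vec) (use Q QT x in auto)
      finally show ?thesis unfolding AQ .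
    qed
    moreover have "Q *\<^sub>v 0\<^sub>v N = 0\<^sub>v N" using Q by (intro eq_vecI) auto
    ultimately have "?A *\<^sub>v x = 0\<^sub>v N" unfolding Qx by simp
    then have "x = 0\<^sub>v N" using burby_kernel[of N mu x] assms x by simp
    then have "transpose_mat Q *\<^sub>v x = 0\<^sub>v N" using QT by (intro eq_vecI) auto
    then show False unfolding Qx using i
      by (metis index_unit_vec(1) index_zero_vec(1) one_neq_zero)
  qed
  define p where "p = card {i. i < N \<and> d i > 0}"
  define q where "q = card {i. i < N \<and> d i < 0}"
  have sig: "burby_bracket_signature N mu = (p, q)"
    unfolding burby_bracket_signature_def signature_def p_def q_def
    using npos_decomp[OF Q QQ AQ] by simp
  have pq: "p + q = N"
  proof -
    have "{i. i < N \<and> d i > 0} \<union> {i. i < N \<and> d i < 0} = {..<N}"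
      using d0 by (auto simp: neq_iff)
    moreover have "{i. i < N \<and> d i > 0} \<inter> {i. i < N \<and> d i < 0} = {}" by auto
    ultimately show ?thesis unfolding p_def q_def
      by (metis (no_types, lifting) card_Un_disjoint card_lessThan finite_Un finite_lessThan)
  qed
  define S where "S = insert 0 {(N + 1) div 2 + 1..<N}"
  have S: "S \<subseteq> {..<N}" unfolding S_def using assms by auto
  have cardS: "card S = N div 2"
  proof -
    have "0 \<notin> {(N + 1) div 2 + 1..<N}" by auto
    then have "card S = Suc (N - ((N + 1) div 2 + 1))" unfolding S_def by simp
    then show ?thesis using assms by linarith
  qed
  have iso: "?A $$ (i,j) = 0" if "i \<in> S" "j \<in> S" for i j
  proof -
    have ij: "i < N" "j < N" using that S by auto
    show ?thesis
    proof (cases "i = 0 \<or> j = 0")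
      case True
      then have "i \<noteq> 1" "j \<noteq> 1" using that unfolding S_def using assms by auto
      then show ?thesis using True ij by (auto simp: burby_entry)
    next
      case False
      then have "i \<ge> (N + 1) div 2 + 1" "j \<ge> (N + 1) div 2 + 1" using that unfolding S_def by auto
      then have "(i - 1) + (j - 1) - 1 > N - 2" using assms(1) by presburger
      then show ?thesis using ij by (auto simp: burby_entry mu_trunc_def)
    qed
  qed
  have b1: "p + card S \<le> N" unfolding p_def by (rule iso_bound[OF Q QQ AQ S iso])
  have negA: "- ?A = Q * dmat N (\<lambda>i. - d i) * transpose_mat Q" by (rule neg_decomp[OF Q AQ])
  have iso2: "(- ?A) $$ (i,j) = 0" if "i \<in> S" "j \<in> S" for i j
  proof -
    have ij: "i < N" "j < N" using that S by auto
    then show ?thesis using iso[OF that] A by simp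
  qed
  have "card {i. i < N \<and> - d i > 0} + card S \<le> N" by (rule iso_bound[OF Q QQ negA S iso2])
  then have b2: "q + card S \<le> N" unfolding q_def by simp
  show ?thesis unfolding sig using pq b1 b2 cardS by auto
qed

end
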